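(* Let $n,k,d,\mu$ be integers with $1\le k\le d<n$ and $\mu\in\{1,2,\dots,k\}$, and let $\mathbb{F}_q$ be a finite field with $q\ge n$. Define $$\alpha(k,d;\mu)=\sum_{m=0}^{\mu}(d-k)^{\mu-m}\binom{k}{m},\qquad \beta(k,d;\mu)=\sum_{m=0}^{\mu}(d-k)^{\mu-m}\binom{k-1}{m-1},$$ $$F(k,d;\mu)=\sum_{m=0}^{\mu}k(d-k)^{\mu-m}\binom{k}{m}-\binom{k}{\mu+1}.$$ Then there exists a linear $(n,k,d)$ exact-repair regenerating code over $\mathbb{F}_q$ with parameters $(\alpha,\beta,F)=(\alpha(k,d;\mu),\beta(k,d;\mu),F(k,d;\mu))$.
   Context: Conventions: $0^0=1$; $\binom{\ell}{m}=0$ if $m<0$ or $m>\ell$. An $(n,k,d)$ exact-repair regenerating code over $\mathbb{F}_q$ with parameters $(\alpha,\beta,F)$ encodes a file consisting of $F$ symbols of $\mathbb{F}_q$ into the contents of $n$ nodes, each node storing $\alpha$ symbols of $\mathbb{F}_q$, such that: (data recovery) for every set of $k$ nodes, the file is a function of the contents of these $k$ nodes; (exact repair) for every node $f$ and every set $\mathcal{H}$ of $d$ nodes not containing $f$, each helper $h\in\mathcal H$ can send $\beta$ symbols of $\mathbb{F}_q$, computed from the content of node $h$ (and the identities of $h$ and $f$), from which the content of node $f$ is exactly reconstructed. The code is linear if all node contents and all transmitted repair symbols are $\mathbb{F}_q$-linear functions of the file symbols. *)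

theory Defs
  imports Main
begin

definition alpha_p :: "nat \<Rightarrow> nat \<Rightarrow> nat \<Rightarrow> nat" where
  "alpha_p k d \<mu> = (\<Sum>m = 0..\<mu>. (d - k) ^ (\<mu> - m) * (k choose m))"

definition beta_p :: "nat \<Rightarrow> nat \<Rightarrow> nat \<Rightarrow> nat" where
  "beta_p k d \<mu> = (\<Sum>m = 0..\<mu>. (d - k) ^ (\<mu> - m) *
      (if m = 0 then 0 else (k - 1) choose (m - 1)))"

definition F_p :: "nat \<Rightarrow> nat \<Rightarrow> nat \<Rightarrow> int" where
  "F_p k d \<mu> = (\<Sum>m = 0..\<mu>. int k * int (d - k) ^ (\<mu> - m) * int (k choose m))
       - int (k choose (\<mu> + 1))"

text \<open>Files: vectors of F symbols, represented as functions vanishing from index F on.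
  Node contents: enc i x j is symbol j (j < alpha) stored at node i for file x.
  Repair messages: rep f h v j is symbol j (j < beta) sent by helper h to repair node f,
  computed from the content v of node h.\<close>

definition files :: "nat \<Rightarrow> (nat \<Rightarrow> 'a::zero) set" where
  "files F = {x. \<forall>i\<ge>F. x i = 0}"

definition content :: "nat \<Rightarrow> (nat \<Rightarrow> (nat \<Rightarrow> 'a) \<Rightarrow> nat \<Rightarrow> 'a::zero) \<Rightarrow> nat \<Rightarrow> (nat \<Rightarrow> 'a) \<Rightarrow> nat \<Rightarrow> 'a" where
  "content \<alpha> enc i x = (\<lambda>j. if j < \<alpha> then enc i x j else 0)"

definition lin_on :: "nat \<Rightarrow> ((nat \<Rightarrow> 'a::field) \<Rightarrow> 'a) \<Rightarrow> bool" where
  "lin_on F g \<longleftrightarrow> (\<forall>x\<in>files F. \<forall>y\<in>files F. \<forall>a.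
       g (\<lambda>i. x i + y i) = g x + g y \<and> g (\<lambda>i. a * x i) = a * g x)"

definition regen_code ::
  "nat \<Rightarrow> nat \<Rightarrow> nat \<Rightarrow> nat \<Rightarrow> nat \<Rightarrow> nat \<Rightarrow>
   (nat \<Rightarrow> (nat \<Rightarrow> 'a::field) \<Rightarrow> nat \<Rightarrow> 'a) \<Rightarrow>
   (nat \<Rightarrow> nat \<Rightarrow> (nat \<Rightarrow> 'a) \<Rightarrow> nat \<Rightarrow> 'a) \<Rightarrow> bool" where
  "regen_code n k d \<alpha> \<beta> F enc rep \<longleftrightarrow>
     \<comment> \<open>data recovery: the file is a function of the contents of any k nodes\<close>
     (\<forall>K. K \<subseteq> {0..<n} \<and> card K = k \<longrightarrow>
        (\<forall>x\<in>files F. \<forall>y\<in>files F.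
           (\<forall>i\<in>K. content \<alpha> enc i x = content \<alpha> enc i y) \<longrightarrow> x = y)) \<and>
     \<comment> \<open>exact repair: content of f is a function of the messages of any d helpers\<close>
     (\<forall>f H. f < n \<and> H \<subseteq> {0..<n} - {f} \<and> card H = d \<longrightarrow>
        (\<forall>x\<in>files F. \<forall>y\<in>files F.
           (\<forall>h\<in>H. \<forall>j<\<beta>. rep f h (content \<alpha> enc h x) j = rep f h (content \<alpha> enc h y) j)
           \<longrightarrow> content \<alpha> enc f x = content \<alpha> enc f y))"

definition linear_code ::
  "nat \<Rightarrow> nat \<Rightarrow> nat \<Rightarrow> nat \<Rightarrow>
   (nat \<Rightarrow> (nat \<Rightarrow> 'a::field) \<Rightarrow> nat \<Rightarrow> 'a) \<Rightarrow>
   (nat \<Rightarrow> nat \<Rightarrow> (nat \<Rightarrow> 'a) \<Rightarrow> nat \<Rightarrow> 'a) \<Rightarrow> bool" where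
  "linear_code n \<alpha> \<beta> F enc rep \<longleftrightarrow>
     (\<forall>i<n. \<forall>j<\<alpha>. lin_on F (\<lambda>x. enc i x j)) \<and>
     (\<forall>f<n. \<forall>h<n. h \<noteq> f \<longrightarrow> (\<forall>j<\<beta>. lin_on F (\<lambda>x. rep f h (content \<alpha> enc h x) j)))"

end

theory Submission
  imports Defs "HOL-Computational_Algebra.Polynomial"
begin


definition sg :: "nat \<Rightarrow> nat set \<Rightarrow> 'a::comm_ring_1" where
  "sg x I = (-1) ^ card {y\<in>I. y<x}"

lemma sg_insert: "y \<notin> I \<Longrightarrow> sg x (insert y I) = (if y < x then - sg x I else (sg x I :: 'a::comm_ring_1))"
proof -
  assume y: "y \<notin> I"
  have fin: "finite {z\<in>I. z<x}" by (rule finite_subset[of _ "{..<x}"]) auto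
  show ?thesis
  proof (cases "y < x")
    case True
    then have "{z\<in>insert y I. z<x} = insert y {z\<in>I. z<x}" by auto
    then have "card {z\<in>insert y I. z<x} = Suc (card {z\<in>I. z<x})" using y fin by simp
    then show ?thesis using True by (simp add: sg_def)
  next
    case False
    then have "{z\<in>insert y I. z<x} = {z\<in>I. z<x}" by auto
    then show ?thesis using False by (simp add: sg_def)
  qed
qed

lemma sg_sq: "sg x I * sg x I = (1::'a::comm_ring_1)"
  by (simp add: sg_def power_mult_distrib[symmetric] flip: power_add)

lemma sg_sq2: "sg x I * (sg x I * z) = (z::'a::comm_ring_1)"
  by (simp add: mult.assoc[symmetric] sg_sq)

lemma sg_anti: "x \<noteq> y \<Longrightarrow> x \<notin> I \<Longrightarrow> y \<notin> I \<Longrightarrow>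
  sg y (insert x I) * sg x (insert y I) = - (sg x I * (sg y I :: 'a::comm_ring_1))"
  by (cases "x < y") (simp_all add: sg_insert)

lemma sg_min: "\<forall>z\<in>I. x \<le> z \<Longrightarrow> sg x I = 1"
proof -
  assume "\<forall>z\<in>I. x \<le> z"
  then have e: "{y\<in>I. y<x} = {}" by auto
  show ?thesis unfolding sg_def e by simp
qed

lemma E1:
  fixes \<omega> :: "nat set \<Rightarrow> 'a::comm_ring_1"
  assumes xk: "x < k"
  shows "(\<Sum>y\<in>{..<k}-I. sg y I * \<psi> y * (if x \<in> insert y I then sg x (insert y I - {x}) * \<omega> (insert y I - {x}) else 0))
       = \<psi> x * \<omega> I - (if x \<in> I then sg x (I-{x}) * (\<Sum>y\<in>{..<k}-(I-{x}). sg y (I-{x}) * \<psi> y * \<omega> (insert y (I-{x}))) else 0)"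
proof (cases "x \<in> I")
  case True
  define I' where "I' = I - {x}"
  have II: "I = insert x I'" "x \<notin> I'" using True by (auto simp: I'_def)
  have D: "{..<k} - I' = insert x ({..<k} - I)" using II xk by auto
  have "(\<Sum>y\<in>{..<k}-I. sg y I * \<psi> y * (if x \<in> insert y I then sg x (insert y I - {x}) * \<omega> (insert y I - {x}) else 0))
      = (\<Sum>y\<in>{..<k}-I. - (sg x I' * sg y I' * \<psi> y * \<omega> (insert y I')))"
  proof (rule sum.cong[OF refl])
    fix y assume y: "y \<in> {..<k} - I"
    then have yx: "y \<noteq> x" "y \<notin> I'" using II by auto
    have e: "insert y I - {x} = insert y I'" using II yx by auto
    have "sg y (insert x I') * sg x (insert y I') = - (sg x I' * (sg y I' :: 'a))"
      using sg_anti[of x y I'] yx II by auto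
    then show "sg y I * \<psi> y * (if x \<in> insert y I then sg x (insert y I - {x}) * \<omega> (insert y I - {x}) else 0)
       = - (sg x I' * sg y I' * \<psi> y * \<omega> (insert y I'))"
      using II e by (simp add: algebra_simps)
  qed
  also have "\<dots> = \<psi> x * \<omega> I - sg x I' * (\<Sum>y\<in>{..<k}-I'. sg y I' * \<psi> y * \<omega> (insert y I'))"
  proof -
    have fin: "finite ({..<k} - I)" by simp
    have nx: "x \<notin> {..<k} - I" using True by simp
    have "sg x I' * (\<Sum>y\<in>{..<k}-I'. sg y I' * \<psi> y * \<omega> (insert y I'))
        = sg x I' * (sg x I' * \<psi> x * \<omega> (insert x I') + (\<Sum>y\<in>{..<k}-I. sg y I' * \<psi> y * \<omega> (insert y I')))"
      by (simp only: D sum.insert[OF fin nx])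
    also have "\<dots> = (sg x I' * sg x I') * \<psi> x * \<omega> I + (\<Sum>y\<in>{..<k}-I. sg x I' * sg y I' * \<psi> y * \<omega> (insert y I'))"
      using II by (simp add: distrib_left sum_distrib_left mult.assoc)
    also have "\<dots> = \<psi> x * \<omega> I + (\<Sum>y\<in>{..<k}-I. sg x I' * sg y I' * \<psi> y * \<omega> (insert y I'))"
      by (simp only: sg_sq mult_1)
    finally show ?thesis by (simp add: sum_negf)
  qed
  finally show ?thesis using True I'_def by simp
next
  case False
  have "(\<Sum>y\<in>{..<k}-I. sg y I * \<psi> y * (if x \<in> insert y I then sg x (insert y I - {x}) * \<omega> (insert y I - {x}) else 0))
     = (\<Sum>y\<in>{..<k}-I. if y = x then \<psi> x * \<omega> I else 0)"
  proof (rule sum.cong[OF refl])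
    fix y assume y: "y \<in> {..<k} - I"
    show "sg y I * \<psi> y * (if x \<in> insert y I then sg x (insert y I - {x}) * \<omega> (insert y I - {x}) else 0) =
         (if y = x then \<psi> x * \<omega> I else 0)"
    proof (cases "y = x")
      case True
      then have e: "insert y I - {x} = I" using False by auto
      have "sg x I * \<psi> x * (sg x I * \<omega> I) = (sg x I * sg x I) * (\<psi> x * \<omega> I)"
        by (simp only: mult_ac)
      then have "sg x I * \<psi> x * (sg x I * \<omega> I) = \<psi> x * \<omega> I" by (simp only: sg_sq mult_1)
      then show ?thesis using True e by simp
    qed (use False in auto)
  qed
  also have "\<dots> = \<psi> x * \<omega> I" using False xk by (simp add: sum.delta')
  finally show ?thesis using False by simp
qed

lemma E2:
  fixes \<omega> :: "nat set \<Rightarrow> 'a::comm_ring_1"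
  shows "(\<Sum>x\<in>{..<k}-I. sg x I * \<psi> x * (\<Sum>y\<in>{..<k}-insert x I. sg y (insert x I) * \<psi> y * \<omega> (insert y (insert x I)))) = 0"
proof -
  define S where "S = {..<k} - I"
  define g where "g x y = sg x I * \<psi> x * (sg y (insert x I) * \<psi> y * \<omega> (insert y (insert x I)))" for x y
  have fS: "finite S" by (simp add: S_def)
  have anti: "g y x = - g x y" if "x \<in> S" "y \<in> S" "x < y" for x y
  proof -
    have "x \<notin> I" "y \<notin> I" using that by (auto simp: S_def)
    then have "sg y (insert x I) = - (sg y I :: 'a)" "sg x (insert y I) = (sg x I :: 'a)"
      using that sg_insert[of x I y] sg_insert[of y I x] by auto
    moreover have "insert x (insert y I) = insert y (insert x I)" by auto
    ultimately show ?thesis by (simp add: g_def algebra_simps)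
  qed
  have split: "{..<k} - insert x I = {y\<in>S. x < y} \<union> {y\<in>S. y < x}" if "x \<in> S" for x
    using that by (auto simp: S_def)
  have "(\<Sum>x\<in>{..<k}-I. sg x I * \<psi> x * (\<Sum>y\<in>{..<k}-insert x I. sg y (insert x I) * \<psi> y * \<omega> (insert y (insert x I))))
      = (\<Sum>x\<in>S. \<Sum>y\<in>{..<k}-insert x I. g x y)"
    by (simp add: S_def g_def sum_distrib_left)
  also have "\<dots> = (\<Sum>x\<in>S. (\<Sum>y\<in>{y\<in>S. x < y}. g x y) + (\<Sum>y\<in>{y\<in>S. y < x}. g x y))"
  proof (rule sum.cong[OF refl])
    fix x assume x: "x \<in> S"
    show "(\<Sum>y\<in>{..<k}-insert x I. g x y) = (\<Sum>y\<in>{y\<in>S. x < y}. g x y) + (\<Sum>y\<in>{y\<in>S. y < x}. g x y)"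
      unfolding split[OF x] by (rule sum.union_disjoint) (use fS in auto)
  qed
  also have "\<dots> = (\<Sum>x\<in>S. \<Sum>y\<in>{y\<in>S. x < y}. g x y) + (\<Sum>x\<in>S. \<Sum>y\<in>{y\<in>S. y < x}. g x y)"
    by (simp add: sum.distrib)
  also have "(\<Sum>x\<in>S. \<Sum>y\<in>{y\<in>S. y < x}. g x y) = (\<Sum>y\<in>S. \<Sum>x\<in>{x\<in>S. y < x}. g x y)"
    using sum.swap_restrict[OF fS fS, of g "\<lambda>x y. y < x"] by simp
  also have "\<dots> = (\<Sum>x\<in>S. \<Sum>y\<in>{y\<in>S. x < y}. - g x y)"
    by (rule sum.cong[OF refl], rule sum.cong[OF refl]) (auto intro: anti)
  finally show ?thesis by (simp add: sum_negf)
qed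

definition wU :: "nat \<Rightarrow> (nat list \<Rightarrow> nat set \<Rightarrow> 'a::comm_ring_1) \<Rightarrow> nat list \<Rightarrow> nat set \<Rightarrow> 'a" where
  "wU x a w J = (-1)^length w * (if x \<in> J then sg x (J - {x}) * a w (J - {x}) else 0)"

definition wW :: "nat \<Rightarrow> (nat list \<Rightarrow> nat set \<Rightarrow> 'a::comm_ring_1) \<Rightarrow> nat list \<Rightarrow> nat set \<Rightarrow> 'a" where
  "wW j a w J = (case w of [] \<Rightarrow> 0 | j'#w' \<Rightarrow> if j' = j then a w' J else 0)"

primrec iota :: "nat \<Rightarrow> nat \<Rightarrow> (nat \<Rightarrow> 'a::comm_ring_1) \<Rightarrow> (nat list \<Rightarrow> nat set \<Rightarrow> 'a) \<Rightarrow> nat list \<Rightarrow> nat set \<Rightarrow> 'a" where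
  "iota k r \<psi> a [] I = (\<Sum>x\<in>{..<k}-I. sg x I * \<psi> x * a [] (insert x I)) + (\<Sum>j<r. \<psi> (k+j) * a [j] I)"
| "iota k r \<psi> a (j#w) I = (\<Sum>j'<r. \<psi> (k+j') * a (j'#j#w) I) - iota k r \<psi> (\<lambda>v. a (j#v)) w I"

lemma iota_add: "iota k r \<psi> (\<lambda>w I. a w I + b w I) w I = iota k r \<psi> a w I + iota k r \<psi> b w I"
  by (induction w arbitrary: a b I) (simp_all add: sum.distrib algebra_simps)

lemma iota_scale: "iota k r \<psi> (\<lambda>w I. c * a w I) w I = c * iota k r \<psi> a w I"
  by (induction w arbitrary: a I) (simp_all add: sum_distrib_left algebra_simps)

lemma iota_zero: "iota k r \<psi> (\<lambda>w I. 0) w I = 0"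
  using iota_scale[of k r \<psi> 0 "\<lambda>w I. 0" w I] by simp

lemma iota_neg: "iota k r \<psi> (\<lambda>w I. - a w I) w I = - iota k r \<psi> a w I"
  using iota_scale[of k r \<psi> "-1" a w I] by simp

lemma iota_diff: "iota k r \<psi> (\<lambda>w I. a w I - b w I) w I = iota k r \<psi> a w I - iota k r \<psi> b w I"
  using iota_add[of k r \<psi> a "\<lambda>w I. - b w I" w I] iota_neg[of k r \<psi> b w I] by simp

lemma iota_sum: "finite S \<Longrightarrow> iota k r \<psi> (\<lambda>w I. \<Sum>s\<in>S. f s w I) w I = (\<Sum>s\<in>S. iota k r \<psi> (f s) w I)"
proof (induction S rule: finite_induct)
  case empty then show ?case using iota_zero by simp
next
  case (insert s S)
  then show ?case using iota_add[of k r \<psi> "f s" "\<lambda>w I. \<Sum>s\<in>S. f s w I" w I] by simp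
qed

lemma iota_wW: "j < r \<Longrightarrow> iota k r \<psi> (wW j a) w I = \<psi> (k+j) * a w I - wW j (iota k r \<psi> a) w I"
proof (cases w)
  case Nil
  assume j: "j < r"
  have "(\<Sum>j'<r. \<psi> (k+j') * wW j a [j'] I) = (\<Sum>j'<r. if j' = j then \<psi> (k+j) * a [] I else 0)"
    by (rule sum.cong) (auto simp: wW_def)
  also have "\<dots> = \<psi> (k+j) * a [] I" using j by simp
  finally show ?thesis using Nil by (simp add: wW_def)
next
  case (Cons j1 w')
  assume j: "j < r"
  have "(\<Sum>j'<r. \<psi> (k+j') * wW j a (j'#j1#w') I) = (\<Sum>j'<r. if j' = j then \<psi> (k+j) * a (j1#w') I else 0)"
    by (rule sum.cong) (auto simp: wW_def)
  also have "\<dots> = \<psi> (k+j) * a (j1#w') I" using j by simp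
  finally have 1: "(\<Sum>j'<r. \<psi> (k+j') * wW j a (j'#j1#w') I) = \<psi> (k+j) * a (j1#w') I" .
  have 2: "(\<lambda>v. wW j a (j1#v)) = (\<lambda>v J. if j1 = j then a v J else 0)"
    by (auto simp: wW_def fun_eq_iff)
  show ?thesis using Cons 1 by (simp add: 2 wW_def iota_zero)
qed

lemma iota_wU: "x < k \<Longrightarrow> iota k r \<psi> (wU x a) w I = \<psi> x * a w I - wU x (iota k r \<psi> a) w I"
proof (induction w arbitrary: a I)
  case Nil
  have e1: "(\<Sum>y\<in>{..<k}-I. sg y I * \<psi> y * wU x a [] (insert y I))
      = \<psi> x * a [] I - (if x \<in> I then sg x (I-{x}) * (\<Sum>y\<in>{..<k}-(I-{x}). sg y (I-{x}) * \<psi> y * a [] (insert y (I-{x}))) else 0)"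
    using E1[OF Nil.prems, of I \<psi> "a []"] by (simp add: wU_def)
  show ?case
    apply (simp only: iota.simps e1)
    apply (simp add: wU_def sum_distrib_left sum_negf algebra_simps)
    done
next
  case (Cons j w)
  have sh: "(\<lambda>v. wU x a (j#v)) = (\<lambda>v J. - wU x (\<lambda>v. a (j#v)) v J)"
    by (auto simp: wU_def fun_eq_iff)
  have h1: "iota k r \<psi> (\<lambda>v. wU x a (j#v)) w I = - (\<psi> x * a (j#w) I - wU x (iota k r \<psi> (\<lambda>v. a (j#v))) w I)"
    unfolding sh iota_neg using Cons.IH[OF Cons.prems, of "\<lambda>v. a (j#v)" I] by simp
  show ?case
    apply (simp only: iota.simps h1)
    apply (simp add: wU_def sum_distrib_left algebra_simps)
    done
qed

lemma iota_iota: "iota k r \<psi> (iota k r \<psi> a) w I = 0"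
proof (induction w arbitrary: a I)
  case Nil
  define S where "S = {..<k} - I"
  have B: "iota k r \<psi> a [] (insert x I) = (\<Sum>y\<in>{..<k}-insert x I. sg y (insert x I) * \<psi> y * a [] (insert y (insert x I))) + (\<Sum>j<r. \<psi>(k+j) * a [j] (insert x I))" for x
    by simp
  have C: "iota k r \<psi> a [j] I = (\<Sum>j'<r. \<psi>(k+j') * a [j',j] I) - ((\<Sum>x\<in>S. sg x I * \<psi> x * a [j] (insert x I)) + (\<Sum>j'<r. \<psi>(k+j') * a [j,j'] I))" for j
    by (simp add: S_def)
  have "iota k r \<psi> (iota k r \<psi> a) [] I = (\<Sum>x\<in>S. sg x I * \<psi> x * iota k r \<psi> a [] (insert x I)) + (\<Sum>j<r. \<psi>(k+j) * iota k r \<psi> a [j] I)"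
    by (simp add: S_def)
  also have "\<dots> = (\<Sum>x\<in>S. sg x I * \<psi> x * (\<Sum>y\<in>{..<k}-insert x I. sg y (insert x I) * \<psi> y * a [] (insert y (insert x I))))
     + (\<Sum>x\<in>S. \<Sum>j<r. sg x I * \<psi> x * (\<psi>(k+j) * a [j] (insert x I)))
     + ((\<Sum>j<r. \<Sum>j'<r. \<psi>(k+j) * (\<psi>(k+j') * a [j',j] I))
     - (\<Sum>j<r. \<Sum>x\<in>S. \<psi>(k+j) * (sg x I * \<psi> x * a [j] (insert x I)))
     - (\<Sum>j<r. \<Sum>j'<r. \<psi>(k+j) * (\<psi>(k+j') * a [j,j'] I)))"
    unfolding B C by (simp add: distrib_left right_diff_distrib sum.distrib sum_distrib_left sum_subtractf)
  also have "(\<Sum>x\<in>S. sg x I * \<psi> x * (\<Sum>y\<in>{..<k}-insert x I. sg y (insert x I) * \<psi> y * a [] (insert y (insert x I)))) = 0"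
    unfolding S_def by (rule E2)
  also have "(\<Sum>j<r. \<Sum>x\<in>S. \<psi>(k+j) * (sg x I * \<psi> x * a [j] (insert x I))) = (\<Sum>x\<in>S. \<Sum>j<r. sg x I * \<psi> x * (\<psi>(k+j) * a [j] (insert x I)))"
    by (subst sum.swap) (simp add: algebra_simps)
  also have "(\<Sum>j<r. \<Sum>j'<r. \<psi>(k+j) * (\<psi>(k+j') * a [j,j'] I)) = (\<Sum>j<r. \<Sum>j'<r. \<psi>(k+j) * (\<psi>(k+j') * a [j',j] I))"
    by (subst sum.swap) (simp add: algebra_simps)
  finally show ?case by simp
next
  case (Cons j w)
  define b where "b j' = (\<lambda>v. a (j'#j#v))" for j'
  have sh: "(\<lambda>v. iota k r \<psi> a (j#v)) = (\<lambda>v J. (\<Sum>j''<r. \<psi>(k+j'') * b j'' v J) - iota k r \<psi> (\<lambda>u. a (j#u)) v J)"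
    by (simp add: fun_eq_iff b_def)
  have 1: "iota k r \<psi> (\<lambda>v. iota k r \<psi> a (j#v)) w I = (\<Sum>j''<r. \<psi>(k+j'') * iota k r \<psi> (b j'') w I)"
    unfolding sh iota_diff using Cons.IH[of "\<lambda>u. a (j#u)" I]
    by (simp add: iota_sum iota_scale)
  have 2: "iota k r \<psi> a (j'#j#w) I = (\<Sum>j''<r. \<psi>(k+j'') * a (j''#j'#j#w) I) - ((\<Sum>j''<r. \<psi>(k+j'') * a (j'#j''#j#w) I) - iota k r \<psi> (b j') w I)" for j'
    by (simp add: b_def)
  have "(\<Sum>j'<r. \<psi>(k+j') * iota k r \<psi> a (j'#j#w) I) =
     (\<Sum>j'<r. \<Sum>j''<r. \<psi>(k+j') * (\<psi>(k+j'') * a (j''#j'#j#w) I)) - (\<Sum>j'<r. \<Sum>j''<r. \<psi>(k+j') * (\<psi>(k+j'') * a (j'#j''#j#w) I))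
     + (\<Sum>j'<r. \<psi>(k+j') * iota k r \<psi> (b j') w I)"
    unfolding 2 by (simp add: right_diff_distrib sum_subtractf sum_distrib_left sum.distrib algebra_simps)
  also have "(\<Sum>j'<r. \<Sum>j''<r. \<psi>(k+j') * (\<psi>(k+j'') * a (j''#j'#j#w) I)) = (\<Sum>j'<r. \<Sum>j''<r. \<psi>(k+j') * (\<psi>(k+j'') * a (j'#j''#j#w) I))"
    by (subst sum.swap) (simp add: algebra_simps)
  finally show ?case using 1 by simp
qed

definition inB :: "nat \<Rightarrow> nat \<Rightarrow> nat \<Rightarrow> nat list \<Rightarrow> nat set \<Rightarrow> bool" where
  "inB k r m w I \<longleftrightarrow> set w \<subseteq> {..<r} \<and> I \<subseteq> {..<k} \<and> length w + card I = m"

lemma iota_supp: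
  assumes "\<forall>v J. a v J \<noteq> 0 \<longrightarrow> inB k r m v J"
    and "iota k r \<psi> a w I \<noteq> 0"
  shows "set w \<subseteq> {..<r} \<and> I \<subseteq> {..<k} \<and> length w + card I + 1 = m"
  using assms
proof (induction w arbitrary: a m I)
  case Nil
  show ?case
  proof (rule ccontr)
    assume nc: "\<not> (set [] \<subseteq> {..<r} \<and> I \<subseteq> {..<k} \<and> length [] + card I + 1 = m)"
    have "a [] (insert x I) = 0" if "x \<in> {..<k} - I" for x
    proof (rule ccontr)
      assume "a [] (insert x I) \<noteq> 0"
      then have "inB k r m [] (insert x I)" using Nil.prems(1) by blast
      then have "I \<subseteq> {..<k}" "card (insert x I) = m" "finite I" using that
        by (auto simp: inB_def dest: finite_subset)
      then show False using nc that by simp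
    qed
    moreover have "a [j] I = 0" if "j < r" for j
    proof (rule ccontr)
      assume "a [j] I \<noteq> 0"
      then have "inB k r m [j] I" using Nil.prems(1) by blast
      then show False using nc by (auto simp: inB_def)
    qed
    ultimately have "iota k r \<psi> a [] I = 0" by simp
    then show False using Nil.prems(2) by simp
  qed
next
  case (Cons j w)
  show ?case
  proof (cases "\<exists>j'<r. a (j'#j#w) I \<noteq> 0")
    case True
    then obtain j' where "a (j'#j#w) I \<noteq> 0" by blast
    then have "inB k r m (j'#j#w) I" using Cons.prems(1) by blast
    then show ?thesis by (auto simp: inB_def)
  next
    case False
    then have "(\<Sum>j'<r. \<psi> (k+j') * a (j'#j#w) I) = 0" by simp
    then have nz: "iota k r \<psi> (\<lambda>v. a (j#v)) w I \<noteq> 0" using Cons.prems(2) by simp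
    have sup: "\<forall>v J. a (j#v) J \<noteq> 0 \<longrightarrow> inB k r (m - 1) v J"
    proof (intro allI impI)
      fix v J assume "a (j#v) J \<noteq> 0"
      then have "inB k r m (j#v) J" using Cons.prems(1) by blast
      then show "inB k r (m - 1) v J" by (auto simp: inB_def)
    qed
    have jr: "j < r"
    proof (rule ccontr)
      assume "\<not> j < r"
      have "a (j#v) J = 0" for v J
      proof (rule ccontr)
        assume "a (j#v) J \<noteq> 0"
        then have "inB k r m (j#v) J" using Cons.prems(1) by blast
        then show False using \<open>\<not> j < r\<close> by (auto simp: inB_def)
      qed
      then have "(\<lambda>v. a (j#v)) = (\<lambda>v J. 0)" by (auto simp: fun_eq_iff)
      then show False using nz iota_zero by metis
    qed
    from Cons.IH[OF sup nz] jr show ?thesis by auto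
  qed
qed

definition Wd :: "nat \<Rightarrow> nat \<Rightarrow> (nat \<Rightarrow> nat list \<Rightarrow> nat set \<Rightarrow> 'a::comm_ring_1) \<Rightarrow> nat list \<Rightarrow> nat set \<Rightarrow> 'a" where
  "Wd k r D w J = (\<Sum>x<k. wU x (D x) w J) + (\<Sum>j<r. wW j (D (k+j)) w J)"

definition Dpsi :: "nat \<Rightarrow> (nat \<Rightarrow> 'a::comm_ring_1) \<Rightarrow> (nat \<Rightarrow> nat list \<Rightarrow> nat set \<Rightarrow> 'a) \<Rightarrow> nat list \<Rightarrow> nat set \<Rightarrow> 'a" where
  "Dpsi d \<psi> D w I = (\<Sum>y<d. \<psi> y * D y w I)"

lemma sum_split_add: "(\<Sum>y<k+(r::nat). f y) = (\<Sum>x<k. f x) + (\<Sum>j<r. f (k+j)::'a::comm_monoid_add)"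
  by (induction r) (simp_all add: add.assoc)

lemma key_identity:
  assumes "d = k + r"
  shows "Wd k r (\<lambda>x. iota k r \<psi> (D x)) w I = Dpsi d \<psi> D w I - iota k r \<psi> (Wd k r D) w I"
proof -
  have "iota k r \<psi> (Wd k r D) w I = (\<Sum>x<k. iota k r \<psi> (wU x (D x)) w I) + (\<Sum>j<r. iota k r \<psi> (wW j (D (k+j))) w I)"
    unfolding Wd_def iota_add by (simp add: iota_sum)
  also have "\<dots> = (\<Sum>x<k. \<psi> x * D x w I - wU x (iota k r \<psi> (D x)) w I) + (\<Sum>j<r. \<psi> (k+j) * D (k+j) w I - wW j (iota k r \<psi> (D (k+j))) w I)"
    by (simp add: iota_wU iota_wW)
  also have "\<dots> = Dpsi d \<psi> D w I - Wd k r (\<lambda>x. iota k r \<psi> (D x)) w I"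
    by (simp add: Dpsi_def Wd_def assms sum_split_add sum_subtractf)
  finally show ?thesis by simp
qed



lemma vander:
  fixes a :: "nat \<Rightarrow> 'a::field"
  assumes inj: "inj_on a K" and cK: "card K = m"
    and z: "\<forall>i\<in>K. (\<Sum>y<m. a i ^ y * c y) = 0"
  shows "\<forall>y<m. c y = 0"
proof -
  define p where "p = (\<Sum>y<m. monom (c y) y)"
  have cp: "coeff p n = (if n < m then c n else 0)" for n
    unfolding p_def by (simp add: coeff_sum coeff_monom)
  have pv: "poly p x = (\<Sum>y<m. x ^ y * c y)" for x
    unfolding p_def by (simp add: poly_sum poly_monom mult.commute)
  have "p = 0"
  proof (rule ccontr)
    assume p0: "p \<noteq> 0"
    have fin: "finite {x. poly p x = 0}" using poly_roots_finite[OF p0] .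
    have "a ` K \<subseteq> {x. poly p x = 0}" using z pv by auto
    then have "card (a ` K) \<le> card {x. poly p x = 0}" using fin by (rule card_mono[rotated])
    then have "m \<le> degree p" using card_image[OF inj] cK card_poly_roots_bound[OF p0] by simp
    moreover have "degree p < m"
    proof -
      have "m > 0"
      proof (rule ccontr)
        assume "\<not> m > 0" then have "p = 0" by (simp add: p_def)
        then show False using p0 by simp
      qed
      moreover have "degree p \<le> m - 1" by (rule degree_le) (auto simp: cp)
      ultimately show ?thesis by simp
    qed
    ultimately show False by simp
  qed
  then show ?thesis using cp by (metis coeff_0)
qed

lemma fin_of_diff: "J - {x::nat} \<subseteq> {..<(k::nat)} \<Longrightarrow> finite J"
  using finite_subset[of "J - {x}" "{..<(k::nat)}"] by simp

definition dep :: "nat \<Rightarrow> nat list \<Rightarrow> nat set \<Rightarrow> bool" where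
  "dep x w I \<longleftrightarrow> w = [] \<and> I \<noteq> {} \<and> x \<notin> I \<and> x < Min I"

definition DU :: "nat \<Rightarrow> nat \<Rightarrow> nat \<Rightarrow> (nat \<times> nat list \<times> nat set \<Rightarrow> 'a::comm_ring_1) \<Rightarrow> nat \<Rightarrow> nat list \<Rightarrow> nat set \<Rightarrow> 'a" where
  "DU k r \<mu> P x w I = (if inB k r \<mu> w I then (if dep x w I then
      - (\<Sum>y\<in>I. sg y (insert x I - {y}) * P (y, [], insert x I - {y})) else P (x, w, I)) else 0)"

definition Dm :: "nat \<Rightarrow> nat \<Rightarrow> nat \<Rightarrow> (nat \<times> nat list \<times> nat set \<Rightarrow> 'a::comm_ring_1) \<Rightarrow> nat \<Rightarrow> nat list \<Rightarrow> nat set \<Rightarrow> 'a" where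
  "Dm k r \<mu> P x = (if x < k then DU k r \<mu> P x else if x < k + r then
      (\<lambda>w J. - (\<Sum>x'<k. wU x' (DU k r \<mu> P x') ((x - k) # w) J)) else (\<lambda>w J. 0))"

lemma Dm_U: "x < k \<Longrightarrow> Dm k r \<mu> P x = DU k r \<mu> P x"
  by (simp add: Dm_def)

lemma Dm_W: "j < r \<Longrightarrow> Dm k r \<mu> P (k+j) w J = - (\<Sum>x'<k. wU x' (DU k r \<mu> P x') (j # w) J)"
  by (simp add: Dm_def)

lemma DU_supp: "DU k r \<mu> P x w I \<noteq> 0 \<Longrightarrow> inB k r \<mu> w I"
  by (auto simp: DU_def split: if_splits)

lemma Dm_supp: "Dm k r \<mu> P x w J \<noteq> 0 \<Longrightarrow> inB k r \<mu> w J"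
proof -
  assume nz: "Dm k r \<mu> P x w J \<noteq> 0"
  show ?thesis
  proof (cases "x < k")
    case True
    then have "DU k r \<mu> P x w J \<noteq> 0" using nz by (simp add: Dm_U)
    then show ?thesis by (rule DU_supp)
  next
    case False
    have xr: "x < k + r"
    proof (rule ccontr)
      assume "\<not> x < k + r"
      then have "Dm k r \<mu> P x w J = 0" using False by (simp add: Dm_def)
      then show False using nz by simp
    qed
    then have "Dm k r \<mu> P x w J = - (\<Sum>x'<k. wU x' (DU k r \<mu> P x') ((x - k) # w) J)"
      using False by (simp add: Dm_def)
    then have "(\<Sum>x'<k. wU x' (DU k r \<mu> P x') ((x - k) # w) J) \<noteq> 0" using nz by simp
    then obtain x' where "x' < k" "wU x' (DU k r \<mu> P x') ((x - k) # w) J \<noteq> 0"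
      by (meson lessThan_iff sum.not_neutral_contains_not_neutral)
    then have "x' \<in> J" "DU k r \<mu> P x' ((x - k) # w) (J - {x'}) \<noteq> 0"
      by (auto simp: wU_def split: if_splits)
    then have "inB k r \<mu> ((x - k) # w) (J - {x'})" using DU_supp by blast
    then have "set w \<subseteq> {..<r}" "J - {x'} \<subseteq> {..<k}" "length w + 1 + card (J - {x'}) = \<mu>"
      by (auto simp: inB_def)
    moreover have "finite J" using \<open>J - {x'} \<subseteq> {..<k}\<close> by (rule fin_of_diff)
    moreover have "Suc (card (J - {x'})) = card J" using \<open>finite J\<close> \<open>x' \<in> J\<close> by (intro card_Suc_Diff1) auto
    ultimately show ?thesis using \<open>x' \<in> J\<close> \<open>x' < k\<close> unfolding inB_def by auto
  qed
qed

lemma Wd_zero: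
  assumes mu: "1 \<le> \<mu>"
  shows "Wd k r (Dm k r \<mu> P) w J = 0"
proof (cases w)
  case (Cons j1 w')
  have W: "(\<Sum>j<r. wW j (Dm k r \<mu> P (k+j)) (j1#w') J) = (if j1 < r then Dm k r \<mu> P (k+j1) w' J else 0)"
    by (simp add: wW_def)
  have U: "(\<Sum>x<k. wU x (Dm k r \<mu> P x) (j1#w') J) = (\<Sum>x<k. wU x (DU k r \<mu> P x) (j1#w') J)"
    by (rule sum.cong) (simp_all add: Dm_U)
  show ?thesis
  proof (cases "j1 < r")
    case True
    then show ?thesis using Cons W U by (simp add: Wd_def Dm_W)
  next
    case False
    have "wU x (DU k r \<mu> P x) (j1#w') J = 0" for x
    proof -
      have "DU k r \<mu> P x (j1#w') J' = 0" for J'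
        using DU_supp[of k r \<mu> P x "j1#w'" J'] False by (auto simp: inB_def)
      then show ?thesis by (simp add: wU_def)
    qed
    then show ?thesis using Cons W U False by (simp add: Wd_def)
  qed
next
  case Nil
  have W: "(\<Sum>j<r. wW j (Dm k r \<mu> P (k+j)) [] J) = 0" by (simp add: wW_def)
  have U: "(\<Sum>x<k. wU x (Dm k r \<mu> P x) [] J) = (\<Sum>x<k. if x \<in> J then sg x (J - {x}) * DU k r \<mu> P x [] (J - {x}) else 0)"
    by (rule sum.cong) (simp_all add: Dm_U wU_def)
  have main: "(\<Sum>x<k. if x \<in> J then sg x (J - {x}) * DU k r \<mu> P x [] (J - {x}) else 0) = 0"
  proof (cases "J \<subseteq> {..<k} \<and> card J = \<mu> + 1")
    case False
    have "(if x \<in> J then sg x (J - {x}) * DU k r \<mu> P x [] (J - {x}) else 0) = 0" if x: "x < k" for x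
    proof (cases "x \<in> J \<and> DU k r \<mu> P x [] (J - {x}) \<noteq> 0")
      case True
      then have "inB k r \<mu> [] (J - {x})" using DU_supp by metis
      then have "J - {x} \<subseteq> {..<k}" "card (J - {x}) = \<mu>" by (auto simp: inB_def)
      moreover have "finite J" using \<open>J - {x} \<subseteq> {..<k}\<close> by (rule fin_of_diff)
      moreover have "Suc (card (J - {x})) = card J" using \<open>finite J\<close> True by (intro card_Suc_Diff1) auto
      ultimately have "J \<subseteq> {..<k} \<and> card J = \<mu> + 1" using True x by auto
      then show ?thesis using False by simp
    qed auto
    then show ?thesis by simp
  next
    case True
    then have Jk: "J \<subseteq> {..<k}" and cJ: "card J = \<mu> + 1" by auto
    have fJ: "finite J" using Jk finite_subset by blast
    have Jne: "J \<noteq> {}" using cJ by auto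
    define m where "m = Min J"
    have mJ: "m \<in> J" using Min_in[OF fJ Jne] by (simp add: m_def)
    have mle: "\<forall>z\<in>J. m \<le> z" using fJ by (simp add: m_def)
    have "(\<Sum>x<k. if x \<in> J then sg x (J - {x}) * DU k r \<mu> P x [] (J - {x}) else 0)
        = (\<Sum>x\<in>J. sg x (J - {x}) * DU k r \<mu> P x [] (J - {x}))"
      using sum.inter_restrict[of "{..<k}" "\<lambda>x. sg x (J - {x}) * DU k r \<mu> P x [] (J - {x})" J] Jk
      by (simp add: Int_absorb1)
    also have "\<dots> = sg m (J - {m}) * DU k r \<mu> P m [] (J - {m}) + (\<Sum>x\<in>J - {m}. sg x (J - {x}) * DU k r \<mu> P x [] (J - {x}))"
      using sum.remove[OF fJ mJ] by simp
    also have "sg m (J - {m}) * DU k r \<mu> P m [] (J - {m}) = - (\<Sum>y\<in>J - {m}. sg y (J - {y}) * P (y, [], J - {y}))"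
    proof -
      have s1: "sg m (J - {m}) = (1::'a)" using mle by (intro sg_min) auto
      have inb: "inB k r \<mu> [] (J - {m})" using Jk cJ fJ mJ by (auto simp: inB_def card_Diff_singleton)
      have "card (J - {m}) = \<mu>" using cJ fJ mJ by (simp add: card_Diff_singleton)
      then have ne: "J - {m} \<noteq> {}" using mu by (metis card.empty not_one_le_zero)
      have "Min (J - {m}) \<in> J - {m}" using Min_in[OF _ ne] fJ by simp
      then have "m < Min (J - {m})" using mle by force
      then have dp: "dep m [] (J - {m})" using ne by (simp add: dep_def)
      have ins: "insert m (J - {m}) = J" using mJ by auto
      show ?thesis using s1 inb dp by (simp add: DU_def ins insert_absorb[OF mJ])
    qed
    also have "(\<Sum>x\<in>J - {m}. sg x (J - {x}) * DU k r \<mu> P x [] (J - {x})) = (\<Sum>y\<in>J - {m}. sg y (J - {y}) * P (y, [], J - {y}))"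
    proof (rule sum.cong[OF refl])
      fix x assume x: "x \<in> J - {m}"
      have inb: "inB k r \<mu> [] (J - {x})" using Jk cJ fJ x by (auto simp: inB_def card_Diff_singleton)
      have "m \<in> J - {x}" using x mJ by auto
      then have "Min (J - {x}) \<le> m" using fJ by (simp add: Min_le)
      moreover have "m < x" using x mle by force
      ultimately have "\<not> dep x [] (J - {x})" by (auto simp: dep_def)
      then show "sg x (J - {x}) * DU k r \<mu> P x [] (J - {x}) = sg x (J - {x}) * P (x, [], J - {x})"
        using inb by (simp add: DU_def)
    qed
    finally show ?thesis by simp
  qed
  show ?thesis using Nil W U main by (simp add: Wd_def)
qed

lemma recover:
  fixes a :: "nat \<Rightarrow> 'a::field"
  assumes inj: "inj_on a K" and cK: "card K = k" and d: "d = k + r"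
    and z: "\<forall>i\<in>K. \<forall>w I. inB k r \<mu> w I \<longrightarrow> Dpsi d (\<lambda>y. a i ^ y) (Dm k r \<mu> P) w I = 0"
  shows "\<forall>x<k. \<forall>w I. DU k r \<mu> P x w I = 0"
proof -
  have main: "\<forall>(w::nat list) (I::nat set) x. x < k \<longrightarrow> \<mu> < length w + t \<longrightarrow> DU k r \<mu> P x w I = 0" for t
  proof (induction t)
    case 0
    show ?case using DU_supp by (fastforce simp: inB_def)
  next
    case (Suc t)
    show ?case
    proof (intro allI impI)
      fix w :: "nat list" and I :: "nat set" and x assume x: "x < k" and lt: "\<mu> < length w + Suc t"
      show "DU k r \<mu> P x w I = 0"
      proof (cases "\<mu> < length w + t")
        case True then show ?thesis using Suc.IH x by blast
      next
        case False
        show ?thesis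
        proof (cases "inB k r \<mu> w I")
          case False then show ?thesis using DU_supp by blast
        next
          case True
          have hW: "Dm k r \<mu> P (k+j) w I = 0" if j: "j < r" for j
          proof -
            have "wU x' (DU k r \<mu> P x') (j # w) I = 0" if "x' < k" for x'
              using Suc.IH that lt False by (simp add: wU_def)
            then show ?thesis using j by (simp add: Dm_W)
          qed
          have "(\<Sum>y<k. a i ^ y * DU k r \<mu> P y w I) = 0" if i: "i \<in> K" for i
          proof -
            have "0 = Dpsi d (\<lambda>y. a i ^ y) (Dm k r \<mu> P) w I" using z i True by simp
            also have "\<dots> = (\<Sum>y<k. a i ^ y * Dm k r \<mu> P y w I) + (\<Sum>j<r. a i ^ (k+j) * Dm k r \<mu> P (k+j) w I)"
              by (simp add: Dpsi_def d sum_split_add)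
            also have "\<dots> = (\<Sum>y<k. a i ^ y * DU k r \<mu> P y w I)"
              by (simp add: hW Dm_U)
            finally show ?thesis by simp
          qed
          then have "\<forall>y<k. DU k r \<mu> P y w I = 0"
            using vander[OF inj cK, of "\<lambda>y. DU k r \<mu> P y w I"] by blast
          then show ?thesis using x by blast
        qed
      qed
    qed
  qed
  show ?thesis
  proof (intro allI impI)
    fix x w I assume "x < k"
    then show "DU k r \<mu> P x w I = 0" using main[of "\<mu> + 1"] by simp
  qed
qed

lemma Dpsi_fun: "Dpsi d \<psi> D = (\<lambda>w I. \<Sum>y<d. \<psi> y * D y w I)"
  by (simp add: fun_eq_iff Dpsi_def)

lemma repair:
  fixes a :: "nat \<Rightarrow> 'a::field"
  assumes inj: "inj_on a H" and cH: "card H = d" and d: "d = k + r" and k1: "0 < k" and mu: "1 \<le> \<mu>"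
    and z: "\<forall>h\<in>H. \<forall>w I. inB k r (\<mu> - 1) w I \<and> 0 \<notin> I \<longrightarrow>
             iota k r (\<lambda>y. b ^ y) (Dpsi d (\<lambda>y. a h ^ y) (Dm k r \<mu> P)) w I = 0"
  shows "Dpsi d (\<lambda>y. b ^ y) (Dm k r \<mu> P) w I = 0"
proof -
  define \<psi> where "\<psi> = (\<lambda>y::nat. b ^ y)"
  define D where "D = Dm k r \<mu> P"
  have lin: "iota k r \<psi> (Dpsi d (\<lambda>y. a h ^ y) D) w I = (\<Sum>y<d. a h ^ y * iota k r \<psi> (D y) w I)" for h w I
    unfolding Dpsi_fun by (simp add: iota_sum iota_scale)
  have c0: "iota k r \<psi> (D y) w I = 0" if y: "y < d" and I0: "0 \<notin> I" for y w I
  proof (cases "inB k r (\<mu> - 1) w I")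
    case True
    have "\<forall>h\<in>H. (\<Sum>y<d. a h ^ y * iota k r \<psi> (D y) w I) = 0"
      using z True I0 lin by (simp add: \<psi>_def D_def)
    then show ?thesis using vander[OF inj cH, of "\<lambda>y. iota k r \<psi> (D y) w I"] y by blast
  next
    case False
    have sup: "\<forall>v J. D y v J \<noteq> 0 \<longrightarrow> inB k r \<mu> v J" using Dm_supp by (auto simp: D_def)
    show ?thesis
    proof (rule ccontr)
      assume "iota k r \<psi> (D y) w I \<noteq> 0"
      from iota_supp[OF sup this] have "inB k r (\<mu> - 1) w I" by (auto simp: inB_def)
      then show False using False by simp
    qed
  qed
  have c1: "iota k r \<psi> (D y) w I = 0" if y: "y < d" for y w I
  proof -
    define c where "c = iota k r \<psi> (D y)"
    have wc: "wU 0 c = (\<lambda>w J. 0)"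
      by (auto simp: fun_eq_iff wU_def c_def intro!: c0[OF y])
    have wic: "wU 0 (iota k r \<psi> c) w I = 0"
      by (simp add: wU_def c_def iota_iota)
    have "iota k r \<psi> (wU 0 c) w I = \<psi> 0 * c w I - wU 0 (iota k r \<psi> c) w I"
      by (rule iota_wU[OF k1])
    then have "c w I = 0" using wc wic by (simp add: iota_zero \<psi>_def)
    then show ?thesis by (simp add: c_def)
  qed
  have "Wd k r (\<lambda>x. iota k r \<psi> (D x)) w I = Dpsi d \<psi> D w I - iota k r \<psi> (Wd k r D) w I"
    by (rule key_identity[OF d])
  moreover have "Wd k r (\<lambda>x. iota k r \<psi> (D x)) w I = 0"
  proof -
    have u: "iota k r \<psi> (D x) w' J = 0" if "x < k" for x w' J using c1 that d by simp
    have v: "iota k r \<psi> (D (k+j)) w' J = 0" if "j < r" for j w' J using c1 that d by simp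
    have "(\<Sum>x<k. wU x (iota k r \<psi> (D x)) w I) = 0"
      by (rule sum.neutral) (simp add: wU_def u)
    moreover have "(\<Sum>j<r. wW j (iota k r \<psi> (D (k+j))) w I) = 0"
      by (rule sum.neutral) (simp add: wW_def v split: list.split)
    ultimately show ?thesis by (simp add: Wd_def)
  qed
  moreover have "Wd k r D = (\<lambda>w I. 0)" by (simp add: fun_eq_iff D_def Wd_zero[OF mu])
  ultimately show ?thesis by (simp add: iota_zero \<psi>_def D_def)
qed



lemma card_Bset:
  assumes fC: "finite C"
  shows "card {(w,I). set w \<subseteq> {..<r} \<and> I \<subseteq> C \<and> length w + card I = m}
       = (\<Sum>l\<le>m. r ^ l * (card C choose (m - l)))"
    and "finite {(w,I). set w \<subseteq> {..<r} \<and> I \<subseteq> C \<and> length w + card I = m}"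
proof -
  define L where "L l = {w. set w \<subseteq> {..<r} \<and> length w = l}" for l
  define S where "S l = {I. I \<subseteq> C \<and> card I = m - l}" for l
  have eq: "{(w,I). set w \<subseteq> {..<r} \<and> I \<subseteq> C \<and> length w + card I = m} = (\<Union>l\<in>{..m}. L l \<times> S l)"
    by (auto simp: L_def S_def)
  have fL: "finite (L l)" for l unfolding L_def by (rule finite_lists_length_eq) simp
  have fS: "finite (S l)" for l unfolding S_def using fC by (auto intro: finite_subset[of _ "Pow C"])
  have cL: "card (L l) = r ^ l" for l unfolding L_def using card_lists_length_eq[of "{..<r}" l] by simp
  have cS: "card (S l) = card C choose (m - l)" for l unfolding S_def by (rule n_subsets[OF fC])
  have "card (\<Union>l\<in>{..m}. L l \<times> S l) = (\<Sum>l\<le>m. card (L l \<times> S l))"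
    apply (rule card_UN_disjoint)
      apply simp
     apply (simp add: fL fS)
    apply (auto simp: L_def)
    done
  then show "card {(w,I). set w \<subseteq> {..<r} \<and> I \<subseteq> C \<and> length w + card I = m}
       = (\<Sum>l\<le>m. r ^ l * (card C choose (m - l)))"
    unfolding eq by (simp add: card_cartesian_product cL cS)
  show "finite {(w,I). set w \<subseteq> {..<r} \<and> I \<subseteq> C \<and> length w + card I = m}"
    unfolding eq by (auto simp: fL fS)
qed

lemma sum_rev_le: fixes f :: "nat \<Rightarrow> 'a::comm_monoid_add" shows "(\<Sum>l\<le>m. f l) = (\<Sum>l=0..m. f (m - l)::'a::comm_monoid_add)"
  using sum.atLeastAtMost_rev[of f 0 m] by (simp add: atLeast0AtMost)

lemma card_B_alpha:
  assumes "d = k + r"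
  shows "card {(w,I). inB k r \<mu> w I} = alpha_p k d \<mu>" and "finite {(w,I). inB k r \<mu> w I}"
proof -
  have e: "{(w,I). inB k r \<mu> w I} = {(w,I). set w \<subseteq> {..<r} \<and> I \<subseteq> {..<k} \<and> length w + card I = \<mu>}"
    by (simp add: inB_def)
  show "finite {(w,I). inB k r \<mu> w I}" unfolding e by (rule card_Bset) simp
  have "card {(w,I). inB k r \<mu> w I} = (\<Sum>l\<le>\<mu>. r ^ l * (k choose (\<mu> - l)))"
    unfolding e using card_Bset(1)[of "{..<k}" r \<mu>] by simp
  also have "\<dots> = (\<Sum>m=0..\<mu>. r ^ (\<mu> - m) * (k choose (\<mu> - (\<mu> - m))))" by (rule sum_rev_le)
  also have "\<dots> = alpha_p k d \<mu>" unfolding alpha_p_def using assms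
    by (intro sum.cong) auto
  finally show "card {(w,I). inB k r \<mu> w I} = alpha_p k d \<mu>" .
qed

lemma card_M_beta:
  assumes "d = k + r" and mu: "1 \<le> \<mu>"
  shows "card {(w,I). inB k r (\<mu> - 1) w I \<and> 0 \<notin> I} = beta_p k d \<mu>"
    and "finite {(w,I). inB k r (\<mu> - 1) w I \<and> 0 \<notin> I}"
proof -
  have ii: "(I \<subseteq> {..<k} \<and> 0 \<notin> I) \<longleftrightarrow> I \<subseteq> {1..<k}" for I :: "nat set"
  proof
    assume h: "I \<subseteq> {..<k} \<and> 0 \<notin> I"
    show "I \<subseteq> {1..<k}"
    proof
      fix x assume "x \<in> I"
      then have "x < k" using h by auto
      moreover have "x \<noteq> 0" using h \<open>x \<in> I\<close> by metis
      ultimately show "x \<in> {1..<k}" by simp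
    qed
  qed auto
  have e: "{(w,I). inB k r (\<mu> - 1) w I \<and> 0 \<notin> I} = {(w,I). set w \<subseteq> {..<r} \<and> I \<subseteq> {1..<k} \<and> length w + card I = \<mu> - 1}"
    using ii by (auto simp: inB_def)
  show "finite {(w,I). inB k r (\<mu> - 1) w I \<and> 0 \<notin> I}" unfolding e by (rule card_Bset) simp
  have "card {(w,I). inB k r (\<mu> - 1) w I \<and> 0 \<notin> I} = (\<Sum>l\<le>\<mu> - 1. r ^ l * ((k - 1) choose (\<mu> - 1 - l)))"
    unfolding e using card_Bset(1)[of "{1..<k}" r "\<mu> - 1"] by simp
  also have "\<dots> = (\<Sum>l\<le>\<mu>. r ^ l * (if \<mu> - l = 0 then 0 else (k - 1) choose (\<mu> - l - 1)))"
  proof -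
    have s: "{..\<mu>} = insert \<mu> {..\<mu> - 1}" using mu by auto
    have "(\<Sum>l\<le>\<mu>. r ^ l * (if \<mu> - l = 0 then 0 else (k - 1) choose (\<mu> - l - 1)))
        = (\<Sum>l\<le>\<mu> - 1. r ^ l * (if \<mu> - l = 0 then 0 else (k - 1) choose (\<mu> - l - 1)))"
      unfolding s using mu by (subst sum.insert) auto
    also have "\<dots> = (\<Sum>l\<le>\<mu> - 1. r ^ l * ((k - 1) choose (\<mu> - 1 - l)))"
      using mu by (intro sum.cong) auto
    finally show ?thesis by simp
  qed
  also have "\<dots> = (\<Sum>m=0..\<mu>. r ^ (\<mu> - m) * (if \<mu> - (\<mu> - m) = 0 then 0 else (k - 1) choose (\<mu> - (\<mu> - m) - 1)))"
    by (rule sum_rev_le)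
  also have "\<dots> = beta_p k d \<mu>" unfolding beta_p_def using assms
    by (intro sum.cong) auto
  finally show "card {(w,I). inB k r (\<mu> - 1) w I \<and> 0 \<notin> I} = beta_p k d \<mu>" .
qed



lemma card_Free:
  assumes d: "d = k + r" and mu: "1 \<le> \<mu>"
  shows "nat (F_p k d \<mu>) \<le> card {(x,w,I). x < k \<and> inB k r \<mu> w I \<and> \<not> dep x w I}"
    and "finite {(x,w,I). x < k \<and> inB k r \<mu> w I \<and> \<not> dep x w I}"
proof -
  define BS where "BS = {(w,I). inB k r \<mu> w I}"
  define All where "All = {(x,w,I). x < k \<and> inB k r \<mu> w I}"
  define Dep where "Dep = {(x,w,I). x < k \<and> inB k r \<mu> w I \<and> dep x w I}"
  have AllBS: "All = {..<k} \<times> BS" by (auto simp: All_def BS_def)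
  have fBS: "finite BS" and cBS: "card BS = alpha_p k d \<mu>" using card_B_alpha[OF d] by (auto simp: BS_def)
  have fAll: "finite All" and cAll: "card All = k * alpha_p k d \<mu>"
    unfolding AllBS using fBS cBS by (auto simp: card_cartesian_product)
  have DepAll: "Dep \<subseteq> All" by (auto simp: Dep_def All_def)
  have fDep: "finite Dep" using DepAll fAll finite_subset by blast
  have Dsub: "Dep \<subseteq> (\<lambda>J. (Min J, ([]::nat list), J - {Min J})) ` {J. J \<subseteq> {..<k} \<and> card J = \<mu> + 1}"
  proof
    fix t assume "t \<in> Dep"
    then obtain x w I where t: "t = (x,w,I)" and x: "x < k" and ib: "inB k r \<mu> w I" and dp: "dep x w I"
      by (auto simp: Dep_def)
    have w: "w = []" and Ine: "I \<noteq> {}" and xI: "x \<notin> I" and xm: "x < Min I" using dp by (auto simp: dep_def)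
    have Ik: "I \<subseteq> {..<k}" and cI: "card I = \<mu>" using ib w by (auto simp: inB_def)
    have fI: "finite I" using Ik finite_subset by blast
    define J where "J = insert x I"
    have "Min J = x" unfolding J_def using fI Ine xm by (simp add: Min_insert)
    moreover have "J - {x} = I" using xI by (auto simp: J_def)
    moreover have "J \<subseteq> {..<k}" "card J = \<mu> + 1" using Ik x fI xI cI by (auto simp: J_def)
    ultimately show "t \<in> (\<lambda>J. (Min J, ([]::nat list), J - {Min J})) ` {J. J \<subseteq> {..<k} \<and> card J = \<mu> + 1}"
      using t w by (intro image_eqI[of _ _ J]) auto
  qed
  have fJ: "finite {J. J \<subseteq> {..<k} \<and> card J = \<mu> + 1}" by (rule finite_subset[of _ "Pow {..<k}"]) auto
  have "card Dep \<le> card ((\<lambda>J. (Min J, ([]::nat list), J - {Min J})) ` {J. J \<subseteq> {..<k} \<and> card J = \<mu> + 1})"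
    using fJ Dsub by (intro card_mono) auto
  also have "\<dots> \<le> card {J. J \<subseteq> {..<k} \<and> card J = \<mu> + 1}" using fJ by (rule card_image_le)
  also have "\<dots> = k choose (\<mu> + 1)" using n_subsets[of "{..<k}" "\<mu> + 1"] by simp
  finally have cDep: "card Dep \<le> k choose (\<mu> + 1)" .
  have FS: "{(x,w,I). x < k \<and> inB k r \<mu> w I \<and> \<not> dep x w I} = All - Dep"
    by (auto simp: All_def Dep_def)
  have cF: "card (All - Dep) = card All - card Dep" using card_Diff_subset[OF fDep DepAll] .
  have Fp: "F_p k d \<mu> = int (k * alpha_p k d \<mu>) - int (k choose (\<mu> + 1))"
    by (simp add: F_p_def alpha_p_def sum_distrib_left of_nat_mult mult.assoc)
  show "nat (F_p k d \<mu>) \<le> card {(x,w,I). x < k \<and> inB k r \<mu> w I \<and> \<not> dep x w I}"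
    unfolding FS cF Fp cAll using cDep by linarith
  show "finite {(x,w,I). x < k \<and> inB k r \<mu> w I \<and> \<not> dep x w I}" unfolding FS using fAll by simp
qed

lemma DU_lin: "DU k r \<mu> (\<lambda>s. c1 * P1 s + c2 * P2 s) x w I = c1 * DU k r \<mu> P1 x w I + c2 * DU k r \<mu> P2 x w I"
  by (simp add: DU_def sum.distrib sum_distrib_left algebra_simps)

lemma wU_DU_lin: "wU x' (DU k r \<mu> (\<lambda>s. c1 * P1 s + c2 * P2 s) x') v J
   = c1 * wU x' (DU k r \<mu> P1 x') v J + c2 * wU x' (DU k r \<mu> P2 x') v J"
  by (cases "x' \<in> J") (simp_all add: wU_def DU_lin algebra_simps)

lemma Dm_lin: "Dm k r \<mu> (\<lambda>s. c1 * P1 s + c2 * P2 s) x w I = c1 * Dm k r \<mu> P1 x w I + c2 * Dm k r \<mu> P2 x w I"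
proof -
  consider "x < k" | "\<not> x < k" "x < k + r" | "\<not> x < k + r" by linarith
  then show ?thesis
  proof cases
    case 1 then show ?thesis by (simp add: Dm_U DU_lin)
  next
    case 2 then show ?thesis by (simp add: Dm_def wU_DU_lin sum.distrib sum_distrib_left algebra_simps)
  next
    case 3 then show ?thesis by (simp add: Dm_def)
  qed
qed

lemma Dpsi_Dm_lin: "Dpsi d \<psi> (Dm k r \<mu> (\<lambda>s. c1 * P1 s + c2 * P2 s)) w I
   = c1 * Dpsi d \<psi> (Dm k r \<mu> P1) w I + c2 * Dpsi d \<psi> (Dm k r \<mu> P2) w I"
  by (simp add: Dpsi_def Dm_lin sum.distrib sum_distrib_left algebra_simps)

lemma iota_lin: "iota k r \<psi> (\<lambda>w I. c1 * a w I + c2 * b w I) w I = c1 * iota k r \<psi> a w I + c2 * iota k r \<psi> b w I"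
  using iota_add[of k r \<psi> "\<lambda>w I. c1 * a w I" "\<lambda>w I. c2 * b w I" w I] by (simp add: iota_scale)



theorem theorem1:
  fixes n k d \<mu> :: nat
  assumes "1 \<le> k" and "k \<le> d" and "d < n"
    and "1 \<le> \<mu>" and "\<mu> \<le> k"
    and "card (UNIV :: 'a::{finite,field} set) \<ge> n"
  shows "\<exists>(enc :: nat \<Rightarrow> (nat \<Rightarrow> 'a::{finite,field}) \<Rightarrow> nat \<Rightarrow> 'a) rep.
           regen_code n k d (alpha_p k d \<mu>) (beta_p k d \<mu>) (nat (F_p k d \<mu>)) enc rep \<and>
           linear_code n (alpha_p k d \<mu>) (beta_p k d \<mu>) (nat (F_p k d \<mu>)) enc rep"
proof -
  define r where "r = d - k"
  have d: "d = k + r" using assms by (simp add: r_def)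
  have k0: "0 < k" using assms by simp
  have mu: "1 \<le> \<mu>" using assms by simp
  obtain a :: "nat \<Rightarrow> 'a" where inj: "inj_on a {..<n}"
    using card_le_inj[of "{..<n}" "UNIV :: 'a set"] assms(6) by auto
  define \<alpha> where "\<alpha> = alpha_p k d \<mu>"
  define \<beta> where "\<beta> = beta_p k d \<mu>"
  define F where "F = nat (F_p k d \<mu>)"
  define BS where "BS = {(w,I). inB k r \<mu> w I}"
  define MS where "MS = {(w,I). inB k r (\<mu> - 1) w I \<and> 0 \<notin> I}"
  define FS where "FS = {(x,w,I). x < k \<and> inB k r \<mu> w I \<and> \<not> dep x w I}"
  have cBS: "card BS = \<alpha>" "finite BS" using card_B_alpha[OF d] by (auto simp: BS_def \<alpha>_def)
  have cMS: "card MS = \<beta>" "finite MS" using card_M_beta[OF d mu] by (auto simp: MS_def \<beta>_def)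
  have cFS: "F \<le> card FS" "finite FS" using card_Free[OF d mu] by (auto simp: FS_def F_def)
  obtain gB where gB: "bij_betw gB {0..<\<alpha>} BS" using ex_bij_betw_nat_finite[OF cBS(2)] cBS(1) by auto
  obtain gM where gM: "bij_betw gM {0..<\<beta>} MS" using ex_bij_betw_nat_finite[OF cMS(2)] cMS(1) by auto
  obtain gF where gF: "bij_betw gF {0..<card FS} FS" using ex_bij_betw_nat_finite[OF cFS(2)] by auto
  define Pf where "Pf x s = x (inv_into {0..<card FS} gF s)" for x :: "nat \<Rightarrow> 'a" and s
  define \<psi> where "\<psi> i y = a i ^ y" for i y
  define E where "E i x = Dpsi d (\<psi> i) (Dm k r \<mu> (Pf x))" for i x
  define enc where "enc i x j = (if j < \<alpha> then E i x (fst (gB j)) (snd (gB j)) else 0)" for i x j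
  define elem where "elem v w I = (if (w,I) \<in> BS then v (inv_into {0..<\<alpha>} gB (w,I)) else 0)"
    for v :: "nat \<Rightarrow> 'a" and w I
  define rep where "rep f (h::nat) v j = (if j < \<beta> then iota k r (\<psi> f) (elem v) (fst (gM j)) (snd (gM j)) else 0)"
    for f h v j

  have E_lin: "E i (\<lambda>t. c1 * x t + c2 * y t) w I = c1 * E i x w I + c2 * E i y w I" for i x y c1 c2 w I
  proof -
    have "Pf (\<lambda>t. c1 * x t + c2 * y t) = (\<lambda>s. c1 * Pf x s + c2 * Pf y s)" by (simp add: Pf_def fun_eq_iff)
    then show ?thesis by (simp add: E_def Dpsi_Dm_lin)
  qed
  have E_supp: "(w,I) \<in> BS" if "E i x w I \<noteq> 0" for i x w I
  proof -
    have "(\<Sum>y<d. \<psi> i y * Dm k r \<mu> (Pf x) y w I) \<noteq> 0" using that by (simp add: E_def Dpsi_def)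
    then obtain y where "\<psi> i y * Dm k r \<mu> (Pf x) y w I \<noteq> 0" using sum.not_neutral_contains_not_neutral by blast
    then have "Dm k r \<mu> (Pf x) y w I \<noteq> 0" by auto
    then show ?thesis using Dm_supp by (auto simp: BS_def)
  qed
  have elem_content: "elem (Defs.content \<alpha> enc h x) = E h x" for h x
  proof (intro ext)
    fix w I
    show "elem (Defs.content \<alpha> enc h x) w I = E h x w I"
    proof (cases "(w,I) \<in> BS")
      case True
      define j where "j = inv_into {0..<\<alpha>} gB (w,I)"
      have j: "j \<in> {0..<\<alpha>}" using True gB unfolding j_def by (metis bij_betw_def inv_into_into)
      have gj: "gB j = (w,I)" using True gB unfolding j_def by (metis bij_betw_def f_inv_into_f)
      show ?thesis using True j gj by (simp add: elem_def Defs.content_def enc_def j_def[symmetric])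
    next
      case False
      then show ?thesis using E_supp by (auto simp: elem_def)
    qed
  qed
  have psi: "\<psi> i = (\<lambda>y. a i ^ y)" for i by (rule ext) (simp add: \<psi>_def)
  have EDp: "E i x w I = Dpsi d (\<lambda>y. a i ^ y) (Dm k r \<mu> (Pf x)) w I" for i x w I by (simp add: E_def psi)
  have rep_content: "rep f h (Defs.content \<alpha> enc h x) j = (if j < \<beta> then iota k r (\<psi> f) (E h x) (fst (gM j)) (snd (gM j)) else 0)" for f h x j
    by (simp add: rep_def elem_content)
  have iota_E_lin: "iota k r \<psi>' (E h (\<lambda>t. c1 * x t + c2 * y t)) w I = c1 * iota k r \<psi>' (E h x) w I + c2 * iota k r \<psi>' (E h y) w I"
    for \<psi>' h x y c1 c2 w I
  proof -
    have "E h (\<lambda>t. c1 * x t + c2 * y t) = (\<lambda>w I. c1 * E h x w I + c2 * E h y w I)" by (simp add: fun_eq_iff E_lin)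
    then show ?thesis by (simp add: iota_lin)
  qed

  have rc: "regen_code n k d \<alpha> \<beta> F enc rep"
    unfolding regen_code_def
  proof (intro conjI allI impI ballI)
    fix K x y
    assume K: "K \<subseteq> {0..<n} \<and> card K = k" and x: "x \<in> files F" and y: "y \<in> files F"
      and eq: "\<forall>i\<in>K. Defs.content \<alpha> enc i x = Defs.content \<alpha> enc i y"
    define z where "z t = 1 * x t + (-1) * y t" for t
    have "K \<subseteq> {..<n}" using K by auto
    then have injK: "inj_on a K" using inj inj_on_subset by blast
    have Exy: "E i x = E i y" if "i \<in> K" for i using eq that elem_content by metis
    have Ez: "E i z w I = E i x w I - E i y w I" for i w I
      using E_lin[of i 1 x "-1" y w I] by (simp add: z_def[abs_def])
    have "\<forall>i\<in>K. \<forall>w I. inB k r \<mu> w I \<longrightarrow> Dpsi d (\<lambda>y. a i ^ y) (Dm k r \<mu> (Pf z)) w I = 0"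
      using Ez Exy by (simp add: EDp[symmetric])
    then have DU0: "\<forall>x<k. \<forall>w I. DU k r \<mu> (Pf z) x w I = 0"
      using recover[OF injK _ d] K by blast
    show "x = y"
    proof
      fix t
      show "x t = y t"
      proof (cases "t < F")
        case True
        then have t: "t \<in> {0..<card FS}" using cFS by auto
        obtain x0 w I where g: "gF t = (x0, w, I)" by (metis prod_cases3)
        have "gF t \<in> FS" using gF t by (auto simp: bij_betw_def)
        then have x0: "x0 < k" and ib: "inB k r \<mu> w I" and nd: "\<not> dep x0 w I" using g by (auto simp: FS_def)
        have "DU k r \<mu> (Pf z) x0 w I = Pf z (x0, w, I)" using ib nd by (simp add: DU_def)
        also have "\<dots> = z t" unfolding Pf_def g[symmetric] using gF t by (simp add: bij_betw_def inv_into_f_f)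
        finally have "z t = 0" using DU0 x0 by simp
        then show ?thesis by (simp add: z_def)
      next
        case False
        then show ?thesis using x y by (simp add: files_def)
      qed
    qed
  next
    fix f H x y
    assume fH: "f < n \<and> H \<subseteq> {0..<n} - {f} \<and> card H = d" and x: "x \<in> files F" and y: "y \<in> files F"
      and eq: "\<forall>h\<in>H. \<forall>j<\<beta>. rep f h (Defs.content \<alpha> enc h x) j = rep f h (Defs.content \<alpha> enc h y) j"
    define z where "z t = 1 * x t + (-1) * y t" for t
    have "H \<subseteq> {..<n}" using fH by auto
    then have injH: "inj_on a H" using inj inj_on_subset by blast
    have "iota k r (\<psi> f) (E h z) w I = 0" if h: "h \<in> H" and wI: "inB k r (\<mu> - 1) w I \<and> 0 \<notin> I" for h w I
    proof -
      define j where "j = inv_into {0..<\<beta>} gM (w,I)"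
      have inM: "(w,I) \<in> MS" using wI by (simp add: MS_def)
      have j: "j \<in> {0..<\<beta>}" using inM gM unfolding j_def by (metis bij_betw_def inv_into_into)
      have gj: "gM j = (w,I)" using inM gM unfolding j_def by (metis bij_betw_def f_inv_into_f)
      have "rep f h (Defs.content \<alpha> enc h x) j = rep f h (Defs.content \<alpha> enc h y) j" using eq h j by auto
      then have "iota k r (\<psi> f) (E h x) w I = iota k r (\<psi> f) (E h y) w I" using j gj by (simp add: rep_content)
      moreover have "iota k r (\<psi> f) (E h z) w I = iota k r (\<psi> f) (E h x) w I - iota k r (\<psi> f) (E h y) w I"
        using iota_E_lin[of "\<psi> f" h 1 x "-1" y w I] by (simp add: z_def[abs_def])
      ultimately show ?thesis by simp
    qed
    moreover have "iota k r (\<psi> f) (E h z) = iota k r (\<lambda>y. a f ^ y) (Dpsi d (\<lambda>y. a h ^ y) (Dm k r \<mu> (Pf z)))" for h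
      by (simp add: E_def psi)
    ultimately have "\<forall>h\<in>H. \<forall>w I. inB k r (\<mu> - 1) w I \<and> 0 \<notin> I \<longrightarrow>
             iota k r (\<lambda>y. a f ^ y) (Dpsi d (\<lambda>y. a h ^ y) (Dm k r \<mu> (Pf z))) w I = 0"
      by metis
    then have Z: "Dpsi d (\<lambda>y. a f ^ y) (Dm k r \<mu> (Pf z)) w I = 0" for w I
      using repair[OF injH _ d k0 mu] fH by blast
    have "E f x w I = E f y w I" for w I
    proof -
      have "E f z w I = 0" using Z[of w I] by (simp add: EDp)
      moreover have "E f z w I = E f x w I - E f y w I"
        using E_lin[of f 1 x "-1" y w I] by (simp add: z_def[abs_def])
      ultimately show ?thesis by simp
    qed
    then show "Defs.content \<alpha> enc f x = Defs.content \<alpha> enc f y"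
      by (simp add: Defs.content_def enc_def fun_eq_iff)
  qed
  have lc: "linear_code n \<alpha> \<beta> F enc rep"
    unfolding linear_code_def lin_on_def
  proof (intro conjI allI impI ballI)
    fix i j x y c
    show "enc i (\<lambda>t. x t + y t) j = enc i x j + enc i y j"
      using E_lin[of i 1 x 1 y] by (simp add: enc_def)
    show "enc i (\<lambda>t. c * x t) j = c * enc i x j"
      using E_lin[of i c x 0 x] by (simp add: enc_def)
  next
    fix f h j x y c
    show "rep f h (Defs.content \<alpha> enc h (\<lambda>t. x t + y t)) j = rep f h (Defs.content \<alpha> enc h x) j + rep f h (Defs.content \<alpha> enc h y) j"
      using iota_E_lin[of "\<psi> f" h 1 x 1 y] by (simp add: rep_content)
    show "rep f h (Defs.content \<alpha> enc h (\<lambda>t. c * x t)) j = c * rep f h (Defs.content \<alpha> enc h x) j"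
      using iota_E_lin[of "\<psi> f" h c x 0 x] by (simp add: rep_content)
  qed
  show ?thesis using rc lc unfolding \<alpha>_def \<beta>_def F_def by blast
qed


end
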